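(* Let $\boldsymbol{\mu}=(\mu_s)_{s\ge1}$ be a fixed probability distribution on $\{1,2,\dots\}$ with $\mu_1>0$ and $\sum_{s=1}^\infty s\mu_s<\infty$, for each $n$ let $\Pi_n\sim ESC_{[n]}(\boldsymbol{\mu})$, and let $M_n$ be the size of the largest cluster of $\Pi_n$. Then $M_n/n\xrightarrow{p}0$ as $n\to\infty$.
   Context: For a fixed distribution $\boldsymbol{\mu}$ on the positive integers with $\mu_1>0$, $ESC_{[n]}(\boldsymbol{\mu})$ is the law of the following random partition of $[n]=\{1,\dots,n\}$: let $S_1,S_2,\dots$ be i.i.d. with law $\boldsymbol{\mu}$, condition on the event $E_n$ that $\sum_{j=1}^k S_j=n$ for some $k\in\mathbb{N}$, let $K$ be that unique $k$, and let $(z_1,\dots,z_n)$ be a uniformly random permutation of the vector with $S_1$ copies of $1$, ..., $S_K$ copies of $K$; the partition has blocks $\{i:z_i=j\}$, $j=1,\dots,K$ (so it has $K$ clusters of sizes $S_1,\dots,S_K$). $\xrightarrow{p}$ denotes convergence in probability. *)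

theory Defs
  imports "HOL-Probability.Probability" "HOL-Combinatorics.Permutations"
begin

text \<open>The i.i.d. sizes S_1,...,S_n with law mu (0-indexed: S j for j < n).
  Only the first n sizes can matter for the event E_n, since every S_j is at least 1.\<close>
definition iid_sizes :: "nat pmf \<Rightarrow> nat \<Rightarrow> (nat \<Rightarrow> nat) pmf" where
  "iid_sizes \<mu> n = Pi_pmf {..<n} 0 (\<lambda>_. \<mu>)"

definition hits :: "nat \<Rightarrow> (nat \<Rightarrow> nat) \<Rightarrow> bool" where
  "hits n S \<longleftrightarrow> (\<exists>k\<le>n. (\<Sum>j<k. S j) = n)"

definition nclust :: "nat \<Rightarrow> (nat \<Rightarrow> nat) \<Rightarrow> nat" where
  "nclust n S = (THE k. k \<le> n \<and> (\<Sum>j<k. S j) = n)"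

text \<open>The vector with S_1 copies of 1, ..., S_K copies of K, as a function of the
  0-based position i: the label j with S_1+...+S_(j-1) <= i < S_1+...+S_j.\<close>
definition lab :: "(nat \<Rightarrow> nat) \<Rightarrow> nat \<Rightarrow> nat" where
  "lab S i = (LEAST j. i < (\<Sum>l<j. S l))"

text \<open>The partition of [n] given the sizes and a permutation sigma of the positions:
  z_i = lab S (sigma (i-1)) for i in {1..n}, blocks {i. z_i = j} for j = 1..K.\<close>
definition blocks :: "nat \<Rightarrow> (nat \<Rightarrow> nat) \<Rightarrow> (nat \<Rightarrow> nat) \<Rightarrow> nat set set" where
  "blocks n S \<sigma> = (\<lambda>j. {i \<in> {1..n}. lab S (\<sigma> (i - 1)) = j}) ` {1..nclust n S}"

definition ESC :: "nat \<Rightarrow> nat pmf \<Rightarrow> nat set set pmf" where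
  "ESC n \<mu> =
     do { S \<leftarrow> cond_pmf (iid_sizes \<mu> n) {S. hits n S};
          \<sigma> \<leftarrow> pmf_of_set {\<sigma>. \<sigma> permutes {..<n}};
          return_pmf (blocks n S \<sigma>) }"

definition largest :: "nat set set \<Rightarrow> nat" where
  "largest P = Max (card ` P)"

end

theory Submission
  imports Defs
begin


lemma prob_bind_pmf: "measure_pmf.prob (bind_pmf M f) X = measure_pmf.expectation M (\<lambda>x. measure_pmf.prob (f x) X)"
proof -
  have "(\<lambda>x. measure_pmf (f x)) \<in> measure_pmf M \<rightarrow>\<^sub>M subprob_algebra (count_space UNIV)"
    by (subst measurable_cong_sets[of _ "count_space UNIV" _ "subprob_algebra (count_space UNIV)"])
       (auto simp: measurable_count_space_eq1 space_subprob_algebra intro: measure_pmf.subprob_space_axioms)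
  then show ?thesis unfolding measure_pmf_bind
    by (rule measure_pmf.measure_bind) auto
qed

lemma prob_cong_support:
  assumes "\<And>x. x \<in> set_pmf p \<Longrightarrow> x \<in> A \<longleftrightarrow> x \<in> B"
  shows "measure_pmf.prob p A = measure_pmf.prob p B"
proof -
  have "A \<inter> set_pmf p = B \<inter> set_pmf p" using assms by blast
  then show ?thesis using measure_Int_set_pmf[of p A] measure_Int_set_pmf[of p B] by simp
qed

lemma iid_support:
  assumes "pmf \<mu> 0 = 0" "S \<in> set_pmf (iid_sizes \<mu> n)"
  shows "\<forall>j<n. S j \<ge> 1" "\<forall>j\<ge>n. S j = 0" "\<forall>j<n. S j \<in> set_pmf \<mu>"
proof -
  have S: "S \<in> PiE_dflt {..<n} 0 (set_pmf \<circ> (\<lambda>_. \<mu>))"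
    using assms(2) set_Pi_pmf[of "{..<n}" 0 "\<lambda>_. \<mu>"] unfolding iid_sizes_def by auto
  then show "\<forall>j<n. S j \<in> set_pmf \<mu>" "\<forall>j\<ge>n. S j = 0" unfolding PiE_dflt_def by auto
  then show "\<forall>j<n. S j \<ge> 1"
    using assms(1) by (metis gr0I less_one not_le set_pmf_iff le_less)

qed

lemma hits_restrict: "hits m S = hits m (\<lambda>x. if x \<in> {..<m} then S x else 0)"
  unfolding hits_def
  by (intro ex_cong1 conj_cong refl arg_cong[where f="\<lambda>x. x = m"] sum.cong) auto

definition u :: "nat pmf \<Rightarrow> nat \<Rightarrow> real" where
  "u \<mu> m = measure_pmf.prob (iid_sizes \<mu> m) {S. hits m S}"

lemma u_marg:
  assumes "m \<le> n"
  shows "measure_pmf.prob (iid_sizes \<mu> n) {S. hits m S} = u \<mu> m"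
proof -
  have "iid_sizes \<mu> m = map_pmf (\<lambda>f x. if x \<in> {..<m} then f x else 0) (iid_sizes \<mu> n)"
    unfolding iid_sizes_def using assms by (intro Pi_pmf_subset) auto
  moreover have "(\<lambda>f x. if x \<in> {..<m} then f x else 0) -` {S. hits m S} = {S. hits m S}"
    using hits_restrict[of m] by auto
  ultimately show ?thesis unfolding u_def by simp
qed

lemma iid_Suc:
  "iid_sizes \<mu> (Suc n) = map_pmf (\<lambda>(s,f). case_nat s f) (pair_pmf \<mu> (iid_sizes \<mu> n))"
proof -
  have e: "{..<Suc n} = insert 0 (Suc ` {..<n})" using lessThan_Suc_eq_insert_0 by blast
  define h where "h i = (if i = 0 then n else i - 1)" for i :: nat
  have "Pi_pmf (Suc ` {..<n}) (0::nat) (\<lambda>_. \<mu>) = map_pmf (\<lambda>g. g \<circ> h) (Pi_pmf {..<n} 0 (\<lambda>_. \<mu>))"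
  proof (rule Pi_pmf_bij_betw)
    show "bij_betw h (Suc ` {..<n}) {..<n}"
      by (rule bij_betw_byWitness[where f'=Suc]) (auto simp: h_def)
    show "h x \<notin> {..<n}" if "x \<notin> Suc ` {..<n}" for x
    proof
      assume "h x \<in> {..<n}"
      then have "x \<noteq> 0" "x - 1 < n" by (auto simp: h_def split: if_splits)
      then have "x \<in> Suc ` {..<n}" by (intro image_eqI[of _ _ "x - 1"]) auto
      then show False using that by simp
    qed
  qed auto
  then have "iid_sizes \<mu> (Suc n) = map_pmf (\<lambda>(y, f). f(0 := y))
       (pair_pmf \<mu> (map_pmf (\<lambda>g. g \<circ> h) (iid_sizes \<mu> n)))"
    unfolding iid_sizes_def e by (subst Pi_pmf_insert) auto
  also have "\<dots> = map_pmf (\<lambda>(s,f). case_nat s f) (pair_pmf \<mu> (iid_sizes \<mu> n))"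
    unfolding pair_map_pmf2 pmf.map_comp
  proof (intro map_pmf_cong refl)
    fix x assume "x \<in> set_pmf (pair_pmf \<mu> (iid_sizes \<mu> n))"
    show "((\<lambda>(y, f). f(0 := y)) \<circ> apsnd (\<lambda>g. g \<circ> h)) x = (\<lambda>(s, f). case_nat s f) x"
      by (cases x) (auto simp: fun_eq_iff h_def split: nat.split)
  qed
  finally show ?thesis .
qed



lemma k_le_sum: assumes "k \<le> n" "\<forall>j<n. f j \<ge> (1::nat)" shows "k \<le> (\<Sum>j<k. f j)"
proof -
  have "(\<Sum>j<k. (1::nat)) \<le> (\<Sum>j<k. f j)" using assms by (intro sum_mono) auto
  then show ?thesis by simp
qed

lemma sum_case_nat: "(\<Sum>j<Suc k. case_nat s f j) = s + (\<Sum>j<k. f j)"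
  unfolding sum.lessThan_Suc_shift by simp

lemma hits_case_nat:
  assumes "\<forall>j<n. f j \<ge> 1" "s \<ge> 1" "s \<le> Suc n"
  shows "hits (Suc n) (case_nat s f) \<longleftrightarrow> hits (Suc n - s) f"
proof
  assume "hits (Suc n) (case_nat s f)"
  then obtain k where k: "k \<le> Suc n" "(\<Sum>j<k. case_nat s f j) = Suc n" unfolding hits_def by auto
  then have "k \<noteq> 0" by (metis lessThan_0 sum.empty nat.distinct(1))
  then obtain k' where k': "k = Suc k'" by (cases k) auto
  with k have e: "s + (\<Sum>j<k'. f j) = Suc n" "k' \<le> n" by (auto simp del: sum.lessThan_Suc simp: sum_case_nat)
  with k_le_sum[OF e(2) assms(1)] have "k' \<le> Suc n - s" by simp
  with e show "hits (Suc n - s) f" unfolding hits_def by (intro exI[of _ k']) auto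
next
  assume "hits (Suc n - s) f"
  then obtain k where k: "k \<le> Suc n - s" "(\<Sum>j<k. f j) = Suc n - s" unfolding hits_def by auto
  then show "hits (Suc n) (case_nat s f)" unfolding hits_def
    using assms by (intro exI[of _ "Suc k"]) (auto simp del: sum.lessThan_Suc simp: sum_case_nat)
qed

lemma hits_case_nat_big:
  assumes "s > Suc n" shows "\<not> hits (Suc n) (case_nat s f)"
proof
  assume "hits (Suc n) (case_nat s f)"
  then obtain k where k: "(\<Sum>j<k. case_nat s f j) = Suc n" unfolding hits_def by auto
  then have "k \<noteq> 0" by (metis lessThan_0 sum.empty nat.distinct(1))
  then obtain k' where k': "k = Suc k'" by (cases k) auto
  with k assms show False by (auto simp del: sum.lessThan_Suc simp: sum_case_nat)
qed

lemma u_rec: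
  assumes "pmf \<mu> 0 = 0"
  shows "u \<mu> (Suc n) = (\<Sum>s\<in>{1..Suc n}. pmf \<mu> s * u \<mu> (Suc n - s))"
proof -
  define Q where "Q = iid_sizes \<mu> n"
  define g where "g s = measure_pmf.prob Q {f. hits (Suc n) (case_nat s f)}" for s
  have pp: "pair_pmf \<mu> Q = bind_pmf \<mu> (\<lambda>s. map_pmf (Pair s) Q)"
    unfolding pair_pmf_def map_pmf_def by simp
  have "u \<mu> (Suc n) = measure_pmf.prob (pair_pmf \<mu> Q) ((\<lambda>(s,f). case_nat s f) -` {S. hits (Suc n) S})"
    unfolding u_def iid_Suc Q_def by simp
  also have "\<dots> = measure_pmf.expectation \<mu> g"
    unfolding pp prob_bind_pmf g_def by (simp add: vimage_def)
  also have "\<dots> = (\<Sum>s\<in>{1..Suc n}. g s * pmf \<mu> s)"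
  proof (rule integral_measure_pmf_real)
    fix a assume a: "a \<in> set_pmf \<mu>" "g a \<noteq> 0"
    have "a \<noteq> 0"
    proof
      assume "a = 0" with a(1) assms show False by (simp add: set_pmf_iff)
    qed
    moreover have "a \<le> Suc n"
    proof (rule ccontr)
      assume "\<not> a \<le> Suc n"
      then have "{f. hits (Suc n) (case_nat a f)} = {}" using hits_case_nat_big by auto
      then show False using a(2) by (simp add: g_def)
    qed
    ultimately show "a \<in> {1..Suc n}" by auto
  qed simp
  also have "\<dots> = (\<Sum>s\<in>{1..Suc n}. pmf \<mu> s * u \<mu> (Suc n - s))"
  proof (rule sum.cong)
    fix s assume s: "s \<in> {1..Suc n}"
    have "g s = measure_pmf.prob Q {f. hits (Suc n - s) f}"
      unfolding g_def
    proof (rule prob_cong_support)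
      fix f assume "f \<in> set_pmf Q"
      then have "\<forall>j<n. f j \<ge> 1" using iid_support[OF assms] unfolding Q_def by blast
      then show "f \<in> {f. hits (Suc n) (case_nat s f)} \<longleftrightarrow> f \<in> {f. hits (Suc n - s) f}"
        using hits_case_nat[of n f s] s by auto
    qed
    also have "\<dots> = u \<mu> (Suc n - s)" unfolding Q_def using s by (intro u_marg) auto
    finally show "g s * pmf \<mu> s = pmf \<mu> s * u \<mu> (Suc n - s)" by simp
  qed simp
  finally show ?thesis .
qed

lemma u_0: "u \<mu> 0 = 1"
proof -
  have "{S. hits 0 S} = UNIV" unfolding hits_def by auto
  then show ?thesis unfolding u_def by simp
qed

lemma u_nonneg: "u \<mu> n \<ge> 0" and u_le1: "u \<mu> n \<le> 1"
  unfolding u_def by simp_all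



context
  fixes \<mu> :: "nat pmf"
  assumes p0: "pmf \<mu> 0 = 0"
    and msum: "summable (\<lambda>s. real s * pmf \<mu> s)"
begin

definition T :: "nat \<Rightarrow> real" where "T j = measure_pmf.prob \<mu> {s. j < s}"

lemma T_nonneg: "T j \<ge> 0" and T_le1: "T j \<le> 1"
  unfolding T_def by simp_all

lemma T_0: "T 0 = 1"
proof -
  have "{s. 0 < s} = UNIV - {0::nat}" by auto
  then have "T 0 = measure_pmf.prob \<mu> UNIV - measure_pmf.prob \<mu> {0}"
    unfolding T_def by (simp add: measure_pmf.finite_measure_Diff)
  then show ?thesis using p0 by (simp add: measure_pmf_single)
qed

lemma T_rec: "T j = T (Suc j) + pmf \<mu> (Suc j)"
proof -
  have "{s. j < s} = {s. Suc j < s} \<union> {Suc j}" by auto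
  then have "T j = measure_pmf.prob \<mu> ({s. Suc j < s} \<union> {Suc j})" unfolding T_def by simp
  also have "\<dots> = T (Suc j) + measure_pmf.prob \<mu> {Suc j}"
    unfolding T_def by (subst measure_pmf.finite_measure_Union) auto
  finally show ?thesis by (simp add: measure_pmf_single)
qed

lemma renewal_identity: "(\<Sum>k\<le>n. u \<mu> k * T (n - k)) = 1"
proof (induction n)
  case 0
  then show ?case by (simp add: u_0 T_0)
next
  case (Suc n)
  have r: "(\<Sum>k\<le>n. u \<mu> k * pmf \<mu> (Suc n - k)) = u \<mu> (Suc n)"
    unfolding u_rec[OF p0]
    by (rule sum.reindex_bij_witness[where i="\<lambda>s. Suc n - s" and j="\<lambda>k. Suc n - k"]) auto
  have "(\<Sum>k\<le>Suc n. u \<mu> k * T (Suc n - k)) = u \<mu> (Suc n) + (\<Sum>k\<le>n. u \<mu> k * T (Suc n - k))"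
    by (simp add: T_0)
  also have "(\<Sum>k\<le>n. u \<mu> k * T (Suc n - k)) = (\<Sum>k\<le>n. u \<mu> k * T (n - k) - u \<mu> k * pmf \<mu> (Suc n - k))"
  proof (rule sum.cong)
    fix k assume "k \<in> {..n}"
    then have "Suc n - k = Suc (n - k)" by auto
    then show "u \<mu> k * T (Suc n - k) = u \<mu> k * T (n - k) - u \<mu> k * pmf \<mu> (Suc n - k)"
      using T_rec[of "n - k"] by (simp add: algebra_simps)
  qed simp
  also have "\<dots> = 1 - u \<mu> (Suc n)" using Suc r by (simp add: sum_subtractf)
  finally show ?case by simp
qed

lemma pmf_sums: "pmf \<mu> sums 1"
proof -
  have "(\<lambda>i. measure_pmf.prob \<mu> {..i}) \<longlonglongrightarrow> measure_pmf.prob \<mu> (\<Union>i. {..i})"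
    by (rule measure_pmf.finite_Lim_measure_incseq) (auto simp: incseq_def)
  moreover have "(\<Union>i. {..i::nat}) = UNIV" by auto
  ultimately have "(\<lambda>i. sum (pmf \<mu>) {..<Suc i}) \<longlonglongrightarrow> 1"
    by (simp add: measure_measure_pmf_finite lessThan_Suc_atMost)
  then show ?thesis unfolding sums_def by (rule filterlim_sequentially_Suc[THEN iffD1])
qed

lemma T_series: "T j = (\<Sum>i. pmf \<mu> (i + Suc j))"
proof -
  have "T j = measure_pmf.prob \<mu> (UNIV - {..j})"
    unfolding T_def by (intro arg_cong[where f="measure_pmf.prob \<mu>"]) auto
  also have "\<dots> = 1 - sum (pmf \<mu>) {..<Suc j}"
    by (simp add: measure_pmf.finite_measure_Diff measure_measure_pmf_finite lessThan_Suc_atMost)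
  also have "\<dots> = (\<Sum>i. pmf \<mu> (i + Suc j))"
    using suminf_minus_initial_segment[of "pmf \<mu>" "Suc j"] pmf_sums
    by (simp add: sums_iff)
  finally show ?thesis .
qed

definition M :: real where "M = (\<Sum>s. real s * pmf \<mu> s)"
definition tailsum :: "nat \<Rightarrow> real" where "tailsum r = (\<Sum>i. real (i + r) * pmf \<mu> (i + r))"

lemma tl_eq: "tailsum r = M - (\<Sum>s<r. real s * pmf \<mu> s)"
  unfolding tailsum_def M_def using suminf_minus_initial_segment[OF msum, of r] by simp

lemma tl_lim: "tailsum \<longlonglongrightarrow> 0"
proof -
  have "(\<lambda>r. M - (\<Sum>s<r. real s * pmf \<mu> s)) \<longlonglongrightarrow> M - M"
    unfolding M_def by (intro tendsto_diff tendsto_const summable_LIMSEQ msum)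
  then show ?thesis unfolding tl_eq[abs_def] by simp
qed

lemma T_tl: "real (Suc m) * T m \<le> tailsum (Suc m)"
proof -
  have s1: "summable (\<lambda>i. pmf \<mu> (i + Suc m))"
    using pmf_sums summable_ignore_initial_segment sums_summable by blast
  have s2: "summable (\<lambda>i. real (i + Suc m) * pmf \<mu> (i + Suc m))"
    using msum summable_ignore_initial_segment by blast
  have "real (Suc m) * T m = (\<Sum>i. real (Suc m) * pmf \<mu> (i + Suc m))"
    unfolding T_series using suminf_mult[OF s1] by simp
  also have "\<dots> \<le> (\<Sum>i. real (i + Suc m) * pmf \<mu> (i + Suc m))"
    by (intro suminf_le summable_mult s1 s2 mult_right_mono) auto
  finally show ?thesis unfolding tailsum_def .
qed

lemma T_sum: "(\<Sum>j<N. T j) = (\<Sum>s<Suc N. real s * pmf \<mu> s) + real N * T N"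
proof (induction N)
  case 0 then show ?case by simp
next
  case (Suc N)
  then show ?case using T_rec[of N] by (simp add: algebra_simps)
qed

lemma T_tail: assumes "R \<le> N" shows "(\<Sum>j\<in>{R..<N}. T j) \<le> tailsum (Suc R)"
proof -
  have "(\<Sum>j<N. T j) = (\<Sum>j<R. T j) + (\<Sum>j\<in>{R..<N}. T j)"
    using sum.atLeastLessThan_concat[of 0 R N T] assms by (simp add: atLeast0LessThan)
  then have "(\<Sum>j\<in>{R..<N}. T j) = (\<Sum>s<Suc N. real s * pmf \<mu> s) + real N * T N
      - (\<Sum>s<Suc R. real s * pmf \<mu> s) - real R * T R"
    using T_sum[of N] T_sum[of R] by simp
  also have "\<dots> \<le> (\<Sum>s<Suc N. real s * pmf \<mu> s) + tailsum (Suc N) - (\<Sum>s<Suc R. real s * pmf \<mu> s)"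
  proof -
    have "real N * T N \<le> real (Suc N) * T N" using T_nonneg[of N] by (intro mult_right_mono) auto
    moreover have "real R * T R \<ge> 0" using T_nonneg[of R] by simp
    ultimately show ?thesis using T_tl[of N] by linarith
  qed
  also have "\<dots> = tailsum (Suc R)" unfolding tl_eq by simp
  finally show ?thesis .
qed

lemma u_step: "u \<mu> (Suc m) \<ge> pmf \<mu> 1 * u \<mu> m"
proof -
  have "pmf \<mu> 1 * u \<mu> (Suc m - 1) \<le> (\<Sum>s\<in>{1..Suc m}. pmf \<mu> s * u \<mu> (Suc m - s))"
    by (rule member_le_sum[where f="\<lambda>s. pmf \<mu> s * u \<mu> (Suc m - s)"]) (auto intro!: mult_nonneg_nonneg u_nonneg)
  then show ?thesis unfolding u_rec[OF p0] by simp
qed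

lemma u_shift: "u \<mu> (m + j) \<ge> pmf \<mu> 1 ^ j * u \<mu> m"
proof (induction j)
  case 0 then show ?case by simp
next
  case (Suc j)
  have "pmf \<mu> 1 ^ Suc j * u \<mu> m = pmf \<mu> 1 * (pmf \<mu> 1 ^ j * u \<mu> m)" by simp
  also have "\<dots> \<le> pmf \<mu> 1 * u \<mu> (m + j)" using Suc by (intro mult_left_mono) auto
  also have "\<dots> \<le> u \<mu> (m + Suc j)" using u_step[of "m + j"] by simp
  finally show ?case .
qed

lemma u_lower:
  assumes p1: "pmf \<mu> 1 > 0"
  shows "\<exists>c>0. \<forall>n. c \<le> u \<mu> n"
proof -
  have "eventually (\<lambda>r. tailsum r < 1/2) sequentially"
    using tl_lim by (rule order_tendstoD) simp
  then obtain N0 where N0: "\<And>r. r \<ge> N0 \<Longrightarrow> tailsum r < 1/2" unfolding eventually_sequentially by blast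
  define R where "R = Suc N0"
  have R1: "R \<ge> 1" unfolding R_def by simp
  have tR: "tailsum (Suc R) < 1/2" using N0 unfolding R_def by simp
  define c where "c = pmf \<mu> 1 ^ R / (2 * real R)"
  have "c > 0" unfolding c_def using p1 R1 by simp
  moreover have "c \<le> u \<mu> n" for n
  proof -
    define I where "I = {..n} \<inter> {..<R}"
    have "1 = (\<Sum>j\<le>n. u \<mu> (n - j) * T j)"
      unfolding renewal_identity[of n, symmetric]
      by (rule sum.reindex_bij_witness[where i="\<lambda>k. n - k" and j="\<lambda>k. n - k"]) auto
    also have "{..n} = I \<union> {R..<Suc n}" unfolding I_def by auto
    also have "(\<Sum>j\<in>I \<union> {R..<Suc n}. u \<mu> (n - j) * T j)
        = (\<Sum>j\<in>I. u \<mu> (n - j) * T j) + (\<Sum>j\<in>{R..<Suc n}. u \<mu> (n - j) * T j)"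
      by (rule sum.union_disjoint) (auto simp: I_def)
    also have "(\<Sum>j\<in>{R..<Suc n}. u \<mu> (n - j) * T j) \<le> (\<Sum>j\<in>{R..<Suc n}. T j)"
      by (intro sum_mono) (auto intro!: mult_left_le_one_le u_le1 u_nonneg T_nonneg)
    also have "(\<Sum>j\<in>{R..<Suc n}. T j) \<le> 1/2"
    proof (cases "R \<le> Suc n")
      case True then show ?thesis using T_tail[OF True] tR by linarith
    qed simp
    finally have big: "(\<Sum>j\<in>I. u \<mu> (n - j) * T j) \<ge> 1/2" by simp
    have "\<exists>j\<in>I. u \<mu> (n - j) \<ge> 1 / (2 * real R)"
    proof (rule ccontr)
      assume "\<not> ?thesis"
      then have lt: "\<And>j. j \<in> I \<Longrightarrow> u \<mu> (n - j) < 1 / (2 * real R)" by auto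
      have I0: "0 \<in> I" unfolding I_def using R1 by auto
      have "(\<Sum>j\<in>I. u \<mu> (n - j) * T j) < (\<Sum>j\<in>I. 1 / (2 * real R))"
      proof (rule sum_strict_mono_ex1)
        show "finite I" unfolding I_def by simp
        show "\<forall>j\<in>I. u \<mu> (n - j) * T j \<le> 1 / (2 * real R)"
        proof
          fix j assume "j \<in> I"
          then have "u \<mu> (n - j) * T j \<le> u \<mu> (n - j)"
            by (intro mult_left_le u_nonneg T_le1)
          then show "u \<mu> (n - j) * T j \<le> 1 / (2 * real R)" using lt[OF \<open>j \<in> I\<close>] by linarith
        qed
        show "\<exists>j\<in>I. u \<mu> (n - j) * T j < 1 / (2 * real R)"
          using lt[OF I0] I0 by (intro bexI[of _ 0]) (auto simp: T_0)
      qed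
      also have "\<dots> = real (card I) / (2 * real R)" by simp
      also have "card I \<le> R" unfolding I_def
        by (metis card_lessThan card_mono finite_lessThan inf_le2)
      then have "real (card I) / (2 * real R) \<le> real R / (2 * real R)"
        by (intro divide_right_mono) auto
      also have "\<dots> = 1/2" using R1 by simp
      finally show False using big by simp
    qed
    then obtain j where j: "j \<in> I" "u \<mu> (n - j) \<ge> 1 / (2 * real R)" by blast
    have "c = pmf \<mu> 1 ^ R * (1 / (2 * real R))" unfolding c_def by simp
    also have "\<dots> \<le> pmf \<mu> 1 ^ j * u \<mu> (n - j)"
    proof (rule mult_mono)
      show "pmf \<mu> 1 ^ R \<le> pmf \<mu> 1 ^ j"
        using j(1) unfolding I_def by (intro power_decreasing) (auto simp: pmf_le_1)
    qed (use j p1 in auto)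
    also have "\<dots> \<le> u \<mu> (n - j + j)" by (rule u_shift)
    also have "n - j + j = n" using j(1) unfolding I_def by auto
    finally show ?thesis .
  qed
  ultimately show ?thesis by blast
qed

end



lemma sum_strict_mono_prefix:
  assumes "(k1::nat) < k2" "k2 \<le> n" "\<forall>j<n. S j \<ge> (1::nat)"
  shows "(\<Sum>j<k1. S j) < (\<Sum>j<k2. S j)"
proof -
  have "k1 < n" using assms by simp
  then have "S k1 \<ge> 1" using assms(3) by blast
  then have "(\<Sum>j<k1. S j) < (\<Sum>j<Suc k1. S j)" by simp
  also have "\<dots> \<le> (\<Sum>j<k2. S j)" using assms by (intro sum_mono2) auto
  finally show ?thesis .
qed

lemma nclust_props:
  assumes "\<forall>j<n. S j \<ge> (1::nat)" "hits n S"
  shows "nclust n S \<le> n \<and> (\<Sum>j<nclust n S. S j) = n"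
  unfolding nclust_def
proof (rule theI')
  show "\<exists>!k. k \<le> n \<and> (\<Sum>j<k. S j) = n"
  proof -
    obtain k where k: "k \<le> n" "(\<Sum>j<k. S j) = n" using assms(2) unfolding hits_def by auto
    moreover have "k' = k" if "k' \<le> n" "(\<Sum>j<k'. S j) = n" for k'
    proof (rule ccontr)
      assume "k' \<noteq> k"
      then have "k' < k \<or> k < k'" by auto
      then show False
        using sum_strict_mono_prefix[OF _ _ assms(1)] k that by fastforce
    qed
    ultimately show ?thesis by blast
  qed
qed

lemma card_block_le:
  assumes "\<forall>j<n. S j \<ge> (1::nat)" "hits n S" "\<sigma> permutes {..<n}" "j \<ge> 1"
  shows "card {i \<in> {1..n}. lab S (\<sigma> (i - 1)) = j} \<le> S (j - 1)"
proof -
  define K where "K = nclust n S"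
  have K: "K \<le> n" "(\<Sum>l<K. S l) = n" using nclust_props[OF assms(1,2)] unfolding K_def by auto
  define Bj where "Bj = {i \<in> {1..n}. lab S (\<sigma> (i - 1)) = j}"
  let ?f = "\<lambda>i. \<sigma> (i - 1)"
  have inj: "inj_on ?f Bj"
  proof (rule inj_onI)
    fix x y assume "x \<in> Bj" "y \<in> Bj" "\<sigma> (x - 1) = \<sigma> (y - 1)"
    then show "x = y" using permutes_inj[OF assms(3)] unfolding Bj_def inj_def by fastforce
  qed
  have sub: "?f ` Bj \<subseteq> {(\<Sum>l<j - 1. S l)..<(\<Sum>l<j. S l)}"
  proof
    fix p assume "p \<in> ?f ` Bj"
    then obtain i where i: "i \<in> {1..n}" "lab S (\<sigma> (i - 1)) = j" "p = \<sigma> (i - 1)" unfolding Bj_def by auto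
    have "i - 1 \<in> {..<n}" using i by auto
    then have "p < n" using i(3) permutes_in_image[OF assms(3)] by auto
    then have ex: "\<exists>j'. p < (\<Sum>l<j'. S l)" using K by (intro exI[of _ K]) simp
    have lab: "lab S p = j" using i by simp
    have "p < (\<Sum>l<j. S l)" using LeastI_ex[OF ex] lab unfolding lab_def by simp
    moreover have "\<not> p < (\<Sum>l<j - 1. S l)"
    proof
      assume "p < (\<Sum>l<j - 1. S l)"
      then have "(LEAST j'. p < (\<Sum>l<j'. S l)) \<le> j - 1" by (rule Least_le)
      then show False using lab assms(4) unfolding lab_def by simp
    qed
    ultimately show "p \<in> {(\<Sum>l<j - 1. S l)..<(\<Sum>l<j. S l)}" by auto
  qed
  have "card Bj \<le> card {(\<Sum>l<j - 1. S l)..<(\<Sum>l<j. S l)}"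
    by (rule card_inj_on_le[OF inj sub]) simp
  also have "\<dots> = S (j - 1)"
  proof -
    have "j = Suc (j - 1)" using assms(4) by simp
    then have "(\<Sum>l<j. S l) = (\<Sum>l<j - 1. S l) + S (j - 1)" by (metis sum.lessThan_Suc)
    then show ?thesis by simp
  qed
  finally show ?thesis unfolding Bj_def .
qed

lemma largest_bound:
  assumes "\<forall>j<n. S j \<ge> (1::nat)" "hits n S" "\<sigma> permutes {..<n}" "n > 0"
  shows "\<exists>j<n. largest (blocks n S \<sigma>) \<le> S j"
proof -
  define K where "K = nclust n S"
  have K: "K \<le> n" "(\<Sum>l<K. S l) = n" using nclust_props[OF assms(1,2)] unfolding K_def by auto
  have "K \<noteq> 0"
  proof
    assume "K = 0" with K assms(4) show False by simp
  qed
  define F where "F j = {i \<in> {1..n}. lab S (\<sigma> (i - 1)) = j}" for j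
  have P: "blocks n S \<sigma> = F ` {1..K}" unfolding blocks_def F_def K_def by simp
  have "card ` F ` {1..K} \<noteq> {}" using \<open>K \<noteq> 0\<close> by auto
  then have "largest (blocks n S \<sigma>) \<in> card ` F ` {1..K}"
    unfolding largest_def P by (intro Max_in) auto
  then obtain j where j: "j \<in> {1..K}" "largest (blocks n S \<sigma>) = card (F j)" by auto
  then have "largest (blocks n S \<sigma>) \<le> S (j - 1)"
    unfolding F_def using card_block_le[OF assms(1-3)] by auto
  moreover have "j - 1 < n" using j K by auto
  ultimately show ?thesis by blast
qed



lemma prob_cond_pmf:
  assumes "measure_pmf.prob p A > 0"
  shows "measure_pmf.prob (cond_pmf p A) B = measure_pmf.prob p (A \<inter> B) / measure_pmf.prob p A"
proof -
  have ne: "set_pmf p \<inter> A \<noteq> {}"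
  proof
    assume "set_pmf p \<inter> A = {}"
    then have "measure_pmf.prob p A = 0" using measure_Int_set_pmf[of p A] by (simp add: Int_commute)
    then show False using assms by simp
  qed
  have "emeasure (measure_pmf p) A \<noteq> 0" using assms
    by (simp add: measure_pmf.emeasure_eq_measure)
  then show ?thesis unfolding cond_pmf.rep_eq[OF ne]
    by (intro measure_uniform_measure) (auto simp: measure_pmf.emeasure_finite)
qed

lemma ESC_map: "ESC n \<mu> = map_pmf (\<lambda>(S,\<sigma>). blocks n S \<sigma>)
    (pair_pmf (cond_pmf (iid_sizes \<mu> n) {S. hits n S}) (pmf_of_set {\<sigma>. \<sigma> permutes {..<n}}))"
  unfolding ESC_def pair_pmf_def map_pmf_def by (simp add: bind_assoc_pmf bind_return_pmf)

lemma nat_floor_filterlim: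
  assumes "(\<epsilon>::real) > 0"
  shows "filterlim (\<lambda>n. nat \<lfloor>\<epsilon> * real n\<rfloor>) sequentially sequentially"
  unfolding filterlim_at_top
proof
  fix Z :: nat
  obtain N :: nat where N: "real N \<ge> (real Z + 1) / \<epsilon>" using real_arch_simple by blast
  show "eventually (\<lambda>n. Z \<le> nat \<lfloor>\<epsilon> * real n\<rfloor>) sequentially"
    unfolding eventually_sequentially
  proof (intro exI allI impI)
    fix n assume "n \<ge> N"
    then have "real n \<ge> (real Z + 1) / \<epsilon>" using N by linarith
    then have "\<epsilon> * real n \<ge> real Z + 1" using assms by (simp add: field_simps)
    then have "int Z + 1 \<le> \<lfloor>\<epsilon> * real n\<rfloor>" by (simp add: le_floor_iff)
    then show "Z \<le> nat \<lfloor>\<epsilon> * real n\<rfloor>" by linarith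
  qed
qed

theorem theorem3:
  fixes \<mu> :: "nat pmf"
  assumes "pmf \<mu> 0 = 0"
    and "pmf \<mu> 1 > 0"
    and "summable (\<lambda>s. real s * pmf \<mu> s)"
  shows "\<forall>\<epsilon>>0. (\<lambda>n. measure_pmf.prob (ESC n \<mu>)
            {P. real (largest P) / real n > \<epsilon>}) \<longlonglongrightarrow> 0"
proof (intro allI impI)
  fix \<epsilon> :: real assume eps: "\<epsilon> > 0"
  note p0 = assms(1) and ms = assms(3)
  obtain c where c: "c > 0" "\<And>n. c \<le> u \<mu> n" using u_lower[OF p0 ms assms(2)] by blast
  define m where "m n = nat \<lfloor>\<epsilon> * real n\<rfloor>" for n
  define g where "g n = tailsum \<mu> (Suc (m n)) / (\<epsilon> * c)" for n
  have bound: "measure_pmf.prob (ESC n \<mu>) {P. real (largest P) / real n > \<epsilon>} \<le> g n" for n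
  proof -
    define Q where "Q = iid_sizes \<mu> n"
    define A where "A = {S. hits n S}"
    define Pm where "Pm = pmf_of_set {\<sigma>. \<sigma> permutes {..<n}}"
    define E where "E = {P. real (largest P) / real n > \<epsilon>}"
    define B where "B = {S. \<exists>j<n. \<epsilon> * real n < real (S j)}"
    define h where "h = (\<lambda>(S,\<sigma>). blocks n S \<sigma>)"
    have QA: "measure_pmf.prob Q A = u \<mu> n" unfolding Q_def A_def u_def ..
    then have QApos: "measure_pmf.prob Q A > 0" using c by (metis less_le_trans)
    have ne: "set_pmf Q \<inter> A \<noteq> {}"
    proof
      assume "set_pmf Q \<inter> A = {}"
      then have "measure_pmf.prob Q A = 0" using measure_Int_set_pmf[of Q A] by (simp add: Int_commute)
      then show False using QApos by simp
    qed
    have permfin: "finite {\<sigma>. \<sigma> permutes {..<n}}" "{\<sigma>. \<sigma> permutes {..<n}} \<noteq> {}"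
      using finite_permutations[of "{..<n}"] permutes_id[of "{..<n}"] by blast+
    have "measure_pmf.prob (ESC n \<mu>) E = measure_pmf.prob (pair_pmf (cond_pmf Q A) Pm) (h -` E)"
      unfolding ESC_map Q_def A_def Pm_def h_def by simp
    also have "\<dots> = measure_pmf.prob (pair_pmf (cond_pmf Q A) Pm) (h -` E \<inter> set_pmf (pair_pmf (cond_pmf Q A) Pm))"
      by (rule measure_Int_set_pmf[symmetric])
    also have "\<dots> \<le> measure_pmf.prob (pair_pmf (cond_pmf Q A) Pm) (fst -` B)"
    proof (rule measure_pmf.finite_measure_mono)
      show "h -` E \<inter> set_pmf (pair_pmf (cond_pmf Q A) Pm) \<subseteq> fst -` B"
      proof
        fix x assume x: "x \<in> h -` E \<inter> set_pmf (pair_pmf (cond_pmf Q A) Pm)"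
        obtain S \<sigma> where xe: "x = (S, \<sigma>)" by (cases x)
        have S: "S \<in> set_pmf Q" "hits n S" and \<sigma>: "\<sigma> permutes {..<n}"
          using x ne permfin unfolding xe Pm_def by (auto simp: A_def)
        have S1: "\<forall>j<n. S j \<ge> 1" using iid_support[OF p0] S(1) unfolding Q_def by blast
        have lt: "\<epsilon> < real (largest (blocks n S \<sigma>)) / real n" using x unfolding xe h_def E_def by simp
        then have npos: "n > 0" using eps by (cases "n = 0") auto
        then have "\<epsilon> * real n < real (largest (blocks n S \<sigma>))" using lt by (simp add: field_simps)
        moreover obtain j where "j < n" "largest (blocks n S \<sigma>) \<le> S j"
          using largest_bound[OF S1 S(2) \<sigma> npos] by blast
        ultimately show "x \<in> fst -` B" unfolding xe B_def by (auto intro!: exI[of _ j])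
      qed
    qed auto
    also have "\<dots> = measure_pmf.prob (cond_pmf Q A) B"
      using measure_map_pmf[of fst "pair_pmf (cond_pmf Q A) Pm" B] by (simp add: map_fst_pair_pmf)
    also have "\<dots> = measure_pmf.prob Q (A \<inter> B) / measure_pmf.prob Q A"
      by (rule prob_cond_pmf[OF QApos])
    also have "\<dots> \<le> measure_pmf.prob Q B / c"
    proof (rule frac_le)
      show "measure_pmf.prob Q (A \<inter> B) \<le> measure_pmf.prob Q B"
        by (rule measure_pmf.finite_measure_mono) auto
    qed (use c QA in auto)
    finally have main: "measure_pmf.prob (ESC n \<mu>) E \<le> measure_pmf.prob Q B / c" .
    have "measure_pmf.prob Q B \<le> (\<Sum>j<n. measure_pmf.prob Q {S. \<epsilon> * real n < real (S j)})"
    proof -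
      have "B = (\<Union>j\<in>{..<n}. {S. \<epsilon> * real n < real (S j)})" unfolding B_def by auto
      then show ?thesis by (simp add: measure_pmf.finite_measure_subadditive_finite)
    qed
    also have "\<dots> = real n * measure_pmf.prob \<mu> {s. \<epsilon> * real n < real s}"
    proof -
      have "measure_pmf.prob Q {S. \<epsilon> * real n < real (S j)} = measure_pmf.prob \<mu> {s. \<epsilon> * real n < real s}"
        if "j < n" for j
      proof -
        have "map_pmf (\<lambda>f. f j) Q = \<mu>" unfolding Q_def iid_sizes_def
          using that by (subst Pi_pmf_component) auto
        then have "measure_pmf.prob \<mu> {s. \<epsilon> * real n < real s} = measure_pmf.prob Q ((\<lambda>f. f j) -` {s. \<epsilon> * real n < real s})"
          by (metis measure_map_pmf)
        then show ?thesis by (simp add: vimage_def)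
      qed
      then show ?thesis by simp
    qed
    also have "\<dots> \<le> real n * T \<mu> (m n)"
    proof (rule mult_left_mono)
      show "measure_pmf.prob \<mu> {s. \<epsilon> * real n < real s} \<le> T \<mu> (m n)"
      unfolding T_def[OF p0 ms]
    proof (rule measure_pmf.finite_measure_mono)
      show "{s. \<epsilon> * real n < real s} \<subseteq> {s. m n < s}"
      proof
        fix s assume "s \<in> {s. \<epsilon> * real n < real s}"
        then have "\<epsilon> * real n < real s" by simp
        then have "\<lfloor>\<epsilon> * real n\<rfloor> < int s" by (simp add: floor_less_iff)
        moreover have "0 \<le> \<lfloor>\<epsilon> * real n\<rfloor>" using eps by simp
        ultimately show "s \<in> {s. m n < s}" unfolding m_def by (simp add: nat_less_iff)
      qed
    qed auto
    qed simp
    finally have QB: "measure_pmf.prob Q B \<le> real n * T \<mu> (m n)" .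
    have Tn: "real n * T \<mu> (m n) \<le> tailsum \<mu> (Suc (m n)) / \<epsilon>"
    proof -
      have "\<epsilon> * real n < real (Suc (m n))"
        unfolding m_def using floor_correct[of "\<epsilon> * real n"] eps
        by (simp add: of_nat_nat) linarith
      then have "real n \<le> real (Suc (m n)) / \<epsilon>" using eps by (simp add: field_simps)
      then have "real n * T \<mu> (m n) \<le> real (Suc (m n)) / \<epsilon> * T \<mu> (m n)"
        using T_nonneg[OF p0 ms] by (intro mult_right_mono) auto
      also have "\<dots> = (real (Suc (m n)) * T \<mu> (m n)) / \<epsilon>" by simp
      also have "\<dots> \<le> tailsum \<mu> (Suc (m n)) / \<epsilon>"
        using T_tl[OF p0 ms] eps by (intro divide_right_mono) auto
      finally show ?thesis .
    qed
    have "measure_pmf.prob Q B / c \<le> (tailsum \<mu> (Suc (m n)) / \<epsilon>) / c"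
      using QB Tn c by (intro divide_right_mono) auto
    then show ?thesis using main unfolding E_def g_def by (simp add: field_simps)
  qed
  show "(\<lambda>n. measure_pmf.prob (ESC n \<mu>) {P. real (largest P) / real n > \<epsilon>}) \<longlonglongrightarrow> 0"
  proof (rule tendsto_sandwich[where f="\<lambda>_. 0" and h=g])
    have "(\<lambda>n. tailsum \<mu> (Suc (m n))) \<longlonglongrightarrow> 0"
    proof -
      have "(\<lambda>r. tailsum \<mu> (Suc r)) \<longlonglongrightarrow> 0"
        using tl_lim[OF p0 ms] by (rule filterlim_sequentially_Suc[THEN iffD2])
      then show ?thesis
        using filterlim_compose nat_floor_filterlim[OF eps] unfolding m_def by blast
    qed
    then show "g \<longlonglongrightarrow> 0" unfolding g_def by (intro tendsto_divide_zero)
  qed (use bound in auto)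
qed


end
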